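(* Assume the Riccati solution $\bar{\mathbf{P}}_{1:s}$ exists and $\bar{\mathbf{P}}_i \succ 0$ for all $i$. Then, (i) there exists a unique Riccati solution $\hat{\mathbf{P}}_{1:r}$ in $\mathbb{S}_r^+$; (ii) $\hat{\mathbf{P}}_k = \bar{\mathbf{P}}_i$ and $\hat{\mathbf{K}}_k = \bar{\mathbf{K}}_i$ for any $i \in \hat{\Omega}_k$, for any $k$.
   Context: $\Sigma$ is an MJS $\mathbf{x}_{t+1}=\mathbf{A}_{\omega_t}\mathbf{x}_t+\mathbf{B}_{\omega_t}\mathbf{u}_t$ with $s$ modes and Markov matrix $\mathbf{T}$. Given a partition $\hat{\Omega}_{1:r}$ of $[s]$, the reduced MJS $\hat{\Sigma}$ has $r$ modes with $\hat{\mathbf{A}}_k,\hat{\mathbf{B}}_k$ the averages of $\mathbf{A}_i,\mathbf{B}_i$ over $i\in\hat{\Omega}_k$ and $\hat{\mathbf{T}}(k,l)=\frac{1}{|\hat{\Omega}_k|}\sum_{i\in\hat{\Omega}_k,j\in\hat{\Omega}_l}\mathbf{T}(i,j)$. The expanded MJS $\bar{\Sigma}$ has $s$ modes with $\bar{\mathbf{A}}_i=\hat{\mathbf{A}}_k$, $\bar{\mathbf{B}}_i=\hat{\mathbf{B}}_k$ for $i\in\hat{\Omega}_k$, and Markov matrix $\bar{\mathbf{T}}$ with $\sum_{j\in\hat{\Omega}_l}\bar{\mathbf{T}}(i,j)=\hat{\mathbf{T}}(k,l)$ for all $i\in\hat{\Omega}_k$. Fix cost matrices $\mathbf{Q}\succ0$,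 $\mathbf{R}\succ0$. Let $\mathbb{S}_m^+$ be the set of $m$-tuples of $n\times n$ PSD matrices. For an MJS with matrices $(\mathbf{A}_i,\mathbf{B}_i)$ and Markov matrix $\mathbf{T}$, define $\varphi_i(\mathbf{X}_{1:m})=\sum_j\mathbf{T}(i,j)\mathbf{X}_j$, $\mathcal{K}_i(\mathbf{X})=-(\mathbf{R}+\mathbf{B}_i^\top\varphi_i(\mathbf{X})\mathbf{B}_i)^{-1}\mathbf{B}_i^\top\varphi_i(\mathbf{X})\mathbf{A}_i$, and $\mathcal{R}_i(\mathbf{X})=\mathbf{Q}+\mathbf{A}_i^\top\varphi_i(\mathbf{X})\mathbf{A}_i-\mathbf{A}_i^\top\varphi_i(\mathbf{X})^\top\mathbf{B}_i(\mathbf{R}+\mathbf{B}_i^\top\varphi_i(\mathbf{X})\mathbf{B}_i)^{-1}\mathbf{B}_i^\top\varphi_i(\mathbf{X})\mathbf{A}_i$. A Riccati solution is $\mathbf{P}_{1:m}$ with $\mathbf{P}_i=\mathcal{R}_i(\mathbf{P}_{1:m})$ for all $i$ (coupled Riccati equations), and the corresponding LQR gains are $\mathbf{K}_i=\mathcal{K}_i(\mathbf{P}_{1:m})$. $\bar{\mathbf{P}}_{1:s},\bar{\mathbf{K}}_{1:s}$ denote these for $\bar{\Sigma}$ and $\hat{\mathbf{P}}_{1:r},\hat{\mathbf{K}}_{1:r}$ for $\hat{\Sigma}$. *)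

theory Defs
  imports "HOL-Analysis.Analysis"
begin

text \<open>Matrices are HOL-Analysis matrices: states in real^'n, inputs in real^'p.
  Modes are indexed by natural numbers 0..<m (0-based). An MJS is given by
  A :: nat => real^'n^'n, B :: nat => real^'p^'n and T :: nat => nat => real.\<close>

definition symmetric_mat :: "real^'a^'a \<Rightarrow> bool" where
  "symmetric_mat M \<longleftrightarrow> transpose M = M"

definition psd_mat :: "real^'a^'a \<Rightarrow> bool" where
  "psd_mat M \<longleftrightarrow> symmetric_mat M \<and> (\<forall>x. 0 \<le> x \<bullet> (M *v x))"

definition pd_mat :: "real^'a^'a \<Rightarrow> bool" where
  "pd_mat M \<longleftrightarrow> symmetric_mat M \<and> (\<forall>x. x \<noteq> 0 \<longrightarrow> 0 < x \<bullet> (M *v x))"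

definition markov :: "nat \<Rightarrow> (nat \<Rightarrow> nat \<Rightarrow> real) \<Rightarrow> bool" where
  "markov m T \<longleftrightarrow> (\<forall>i<m. \<forall>j<m. 0 \<le> T i j) \<and> (\<forall>i<m. (\<Sum>j<m. T i j) = 1)"

definition in_S_plus :: "nat \<Rightarrow> (nat \<Rightarrow> real^'n^'n) \<Rightarrow> bool" where
  "in_S_plus m X \<longleftrightarrow> (\<forall>i<m. psd_mat (X i))"

definition phi :: "nat \<Rightarrow> (nat \<Rightarrow> nat \<Rightarrow> real) \<Rightarrow> (nat \<Rightarrow> real^'n^'n) \<Rightarrow> nat \<Rightarrow> real^'n^'n" where
  "phi m T X i = (\<Sum>j<m. T i j *\<^sub>R X j)"

definition gainK ::
  "real^'p^'p \<Rightarrow> nat \<Rightarrow> (nat \<Rightarrow> real^'n^'n) \<Rightarrow> (nat \<Rightarrow> real^'p^'n)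
    \<Rightarrow> (nat \<Rightarrow> nat \<Rightarrow> real) \<Rightarrow> (nat \<Rightarrow> real^'n^'n) \<Rightarrow> nat \<Rightarrow> real^'n^'p" where
  "gainK R m A B T X i =
     - (matrix_inv (R + transpose (B i) ** phi m T X i ** B i)
         ** transpose (B i) ** phi m T X i ** A i)"

definition riccR ::
  "real^'n^'n \<Rightarrow> real^'p^'p \<Rightarrow> nat \<Rightarrow> (nat \<Rightarrow> real^'n^'n) \<Rightarrow> (nat \<Rightarrow> real^'p^'n)
    \<Rightarrow> (nat \<Rightarrow> nat \<Rightarrow> real) \<Rightarrow> (nat \<Rightarrow> real^'n^'n) \<Rightarrow> nat \<Rightarrow> real^'n^'n" where
  "riccR Q R m A B T X i =
     Q + transpose (A i) ** phi m T X i ** A i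
       - transpose (A i) ** transpose (phi m T X i) ** B i
         ** matrix_inv (R + transpose (B i) ** phi m T X i ** B i)
         ** transpose (B i) ** phi m T X i ** A i"

definition riccati_sol ::
  "real^'n^'n \<Rightarrow> real^'p^'p \<Rightarrow> nat \<Rightarrow> (nat \<Rightarrow> real^'n^'n) \<Rightarrow> (nat \<Rightarrow> real^'p^'n)
    \<Rightarrow> (nat \<Rightarrow> nat \<Rightarrow> real) \<Rightarrow> (nat \<Rightarrow> real^'n^'n) \<Rightarrow> bool" where
  "riccati_sol Q R m A B T P \<longleftrightarrow> (\<forall>i<m. P i = riccR Q R m A B T P i)"

definition is_partition :: "nat \<Rightarrow> nat \<Rightarrow> (nat \<Rightarrow> nat set) \<Rightarrow> bool" where
  "is_partition s r \<Omega> \<longleftrightarrow>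
     (\<forall>k<r. \<Omega> k \<noteq> {}) \<and>
     (\<forall>k<r. \<forall>l<r. k \<noteq> l \<longrightarrow> \<Omega> k \<inter> \<Omega> l = {}) \<and>
     (\<Union>k<r. \<Omega> k) = {..<s}"

definition avg_mat :: "(nat \<Rightarrow> nat set) \<Rightarrow> (nat \<Rightarrow> 'a::real_vector) \<Rightarrow> nat \<Rightarrow> 'a" where
  "avg_mat \<Omega> X k = (1 / real (card (\<Omega> k))) *\<^sub>R (\<Sum>i\<in>\<Omega> k. X i)"

definition reduced_T :: "(nat \<Rightarrow> nat set) \<Rightarrow> (nat \<Rightarrow> nat \<Rightarrow> real) \<Rightarrow> nat \<Rightarrow> nat \<Rightarrow> real" where
  "reduced_T \<Omega> T k l = (1 / real (card (\<Omega> k))) * (\<Sum>i\<in>\<Omega> k. \<Sum>j\<in>\<Omega> l. T i j)"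

definition block_of :: "nat \<Rightarrow> (nat \<Rightarrow> nat set) \<Rightarrow> nat \<Rightarrow> nat" where
  "block_of r \<Omega> i = (THE k. k < r \<and> i \<in> \<Omega> k)"

definition expand :: "nat \<Rightarrow> (nat \<Rightarrow> nat set) \<Rightarrow> (nat \<Rightarrow> 'a) \<Rightarrow> nat \<Rightarrow> 'a" where
  "expand r \<Omega> Y i = Y (block_of r \<Omega> i)"

end

theory Submission
  imports Defs
begin


definition qf :: "real^'a^'a \<Rightarrow> real^'a \<Rightarrow> real" where
  "qf M x = x \<bullet> (M *v x)"

lemma dot_transpose: "x \<bullet> (transpose A *v y) = (A *v x) \<bullet> (y::real^_)"
  by (metis dot_lmul_matrix inner_commute transpose_matrix_vector vector_transpose_matrix transpose_transpose)

lemma dot_vmul: "z \<bullet> (y v* B) = (B *v z) \<bullet> (y::real^_)"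
  by (metis dot_lmul_matrix inner_commute)

lemma transpose_add: "transpose (A + B) = transpose A + transpose (B::real^_^_)"
  by (simp add: transpose_def vec_eq_iff)

lemma neg_mv: "(- A) *v x = - (A *v (x::real^_))"
  by (simp add: matrix_vector_mult_def vec_eq_iff sum_negf)

lemma sym_dot: "symmetric_mat M \<Longrightarrow> x \<bullet> (M *v y) = (M *v x) \<bullet> (y::real^_)"
  by (metis dot_transpose symmetric_mat_def)

lemma pd_invertible:
  fixes S :: "real^'p^'p"
  assumes "\<forall>x. x \<noteq> 0 \<longrightarrow> 0 < x \<bullet> (S *v x)"
  shows "S ** matrix_inv S = mat 1 \<and> matrix_inv S ** S = mat 1"
proof -
  have "\<forall>x. S *v x = 0 \<longrightarrow> x = 0" using assms by (metis inner_zero_right less_irrefl)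
  then have "invertible S" using matrix_left_invertible_ker invertible_left_inverse by blast
  then show ?thesis unfolding invertible_def matrix_inv_def by (rule someI_ex)
qed

lemma core:
  fixes A :: "real^'n^'n" and B :: "real^'p^'n" and Phi Q :: "real^'n^'n" and R :: "real^'p^'p"
  assumes symP: "symmetric_mat Phi" and psdP: "\<forall>y. 0 \<le> y \<bullet> (Phi *v y)" and Rpd: "pd_mat R"
  defines "S \<equiv> R + transpose B ** Phi ** B"
  defines "X \<equiv> Q + transpose A ** Phi ** A - transpose A ** transpose Phi ** B ** matrix_inv S ** transpose B ** Phi ** A"
  defines "G \<equiv> - (matrix_inv S ** transpose B ** Phi ** A)"
  shows "x \<bullet> (X *v x) + (u - G *v x) \<bullet> (S *v (u - G *v x)) =
     x \<bullet> (Q *v x) + u \<bullet> (R *v u) + (A *v x + B *v u) \<bullet> (Phi *v (A *v x + B *v u))"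
    and "0 \<le> z \<bullet> (S *v z)"
proof -
  have Spd: "\<forall>z. z \<noteq> 0 \<longrightarrow> 0 < z \<bullet> (S *v z)"
  proof (intro allI impI)
    fix z :: "real^'p" assume "z \<noteq> 0"
    then have "0 < z \<bullet> (R *v z)" using Rpd unfolding pd_mat_def by auto
    moreover have "z \<bullet> ((transpose B ** Phi ** B) *v z) = (B *v z) \<bullet> (Phi *v (B *v z))"
      by (simp add: matrix_vector_mul_assoc[symmetric] dot_transpose dot_vmul)
    ultimately show "0 < z \<bullet> (S *v z)" using psdP
      by (simp add: S_def matrix_vector_mult_add_rdistrib inner_add_right add_pos_nonneg)
  qed
  then show "0 \<le> z \<bullet> (S *v z)" by (cases "z = 0") (auto intro: less_imp_le)
  have inv: "S ** matrix_inv S = mat 1" using pd_invertible[OF Spd] by blast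
  have symS: "symmetric_mat S"
    using Rpd symP unfolding S_def symmetric_mat_def pd_mat_def
    by (simp add: transpose_add matrix_transpose_mul matrix_mul_assoc)
  define w where "w = A *v x"
  define g where "g = transpose B *v (Phi *v w)"
  define h where "h = matrix_inv S *v g"
  have Sh: "S *v h = g" unfolding h_def by (simp add: matrix_vector_mul_assoc inv)
  have Gx: "G *v x = - h"
    unfolding G_def h_def g_def w_def
    by (simp add: matrix_vector_mul_assoc[symmetric] neg_mv)
  have Xx: "x \<bullet> (X *v x) = x \<bullet> (Q *v x) + w \<bullet> (Phi *v w) - g \<bullet> h"
  proof -
    have "x \<bullet> ((transpose A ** transpose Phi ** B ** matrix_inv S ** transpose B ** Phi ** A) *v x)
       = g \<bullet> h"
      unfolding g_def h_def w_def
      by (simp add: matrix_vector_mul_assoc[symmetric] dot_transpose dot_vmul sym_dot[OF symP] inner_commute) (metis dot_lmul_matrix)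
    moreover have "x \<bullet> ((transpose A ** Phi ** A) *v x) = w \<bullet> (Phi *v w)"
      unfolding w_def by (simp add: matrix_vector_mul_assoc[symmetric] dot_transpose dot_vmul)
    ultimately show ?thesis unfolding X_def
      by (simp add: matrix_vector_mult_add_rdistrib matrix_vector_mult_diff_rdistrib inner_add_right inner_diff_right)
  qed
  have Su: "u \<bullet> (S *v u) = u \<bullet> (R *v u) + (B *v u) \<bullet> (Phi *v (B *v u))"
    unfolding S_def by (simp add: matrix_vector_mult_add_rdistrib inner_add_right matrix_vector_mul_assoc[symmetric] dot_transpose dot_vmul)
  have ug: "u \<bullet> g = (B *v u) \<bullet> (Phi *v w)" unfolding g_def by (simp add: dot_transpose dot_vmul)
  have hS: "h \<bullet> (S *v u) = g \<bullet> u" using sym_dot[OF symS, of h u] Sh by simp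
  have "(u - G *v x) \<bullet> (S *v (u - G *v x)) = u \<bullet> (S *v u) + 2 * (u \<bullet> g) + h \<bullet> g"
    unfolding Gx using Sh hS
    by (simp add: matrix_vector_right_distrib inner_add_left inner_add_right inner_commute)
  moreover have "(A *v x + B *v u) \<bullet> (Phi *v (A *v x + B *v u)) =
      w \<bullet> (Phi *v w) + 2 * ((B *v u) \<bullet> (Phi *v w)) + (B *v u) \<bullet> (Phi *v (B *v u))"
    unfolding w_def[symmetric] using sym_dot[OF symP, of w "B *v u"]
    by (simp add: matrix_vector_right_distrib inner_add_left inner_add_right inner_commute)
  ultimately show "x \<bullet> (X *v x) + (u - G *v x) \<bullet> (S *v (u - G *v x)) =
     x \<bullet> (Q *v x) + u \<bullet> (R *v u) + (A *v x + B *v u) \<bullet> (Phi *v (A *v x + B *v u))"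
    using Xx Su ug by (simp add: inner_commute[of g h])
qed

lemma sum_mv: "finite S \<Longrightarrow> (sum f S) *v y = (\<Sum>j\<in>S. f j *v (y::real^_))"
  by (induction S rule: finite_induct) (auto simp: matrix_vector_mult_add_rdistrib)

lemma sum_transpose: "finite S \<Longrightarrow> transpose (sum f S) = (\<Sum>j\<in>S. transpose (f j :: real^_^_))"
  by (induction S rule: finite_induct) (auto simp: transpose_add transpose_def vec_eq_iff)

lemma phi_quad: "y \<bullet> (phi m T X i *v y) = (\<Sum>j<m. T i j * (y \<bullet> (X j *v y)))"
  unfolding phi_def
  by (simp add: sum_mv inner_sum_right scaleR_matrix_vector_assoc[symmetric])

lemma phi_sym: "\<forall>j<m. symmetric_mat (X j) \<Longrightarrow> symmetric_mat (phi m T X i)"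
  unfolding phi_def symmetric_mat_def
  by (simp add: sum_transpose transpose_scalar)

lemma phi_psd: "\<forall>j<m. 0 \<le> T i j \<Longrightarrow> \<forall>j<m. psd_mat (X j) \<Longrightarrow> 0 \<le> y \<bullet> (phi m T X i *v y)"
  unfolding phi_quad psd_mat_def by (auto intro!: sum_nonneg)

lemma ric_facts:
  assumes Tn: "\<forall>j<m. 0 \<le> T i j" and Xp: "\<forall>j<m. psd_mat (X j)" and Rpd: "pd_mat R"
  shows "x \<bullet> (riccR Q R m A B T X i *v x) \<le> x \<bullet> (Q *v x) + u \<bullet> (R *v u)
           + (A i *v x + B i *v u) \<bullet> (phi m T X i *v (A i *v x + B i *v u))"
    and "x \<bullet> (riccR Q R m A B T X i *v x) = x \<bullet> (Q *v x) + (gainK R m A B T X i *v x) \<bullet> (R *v (gainK R m A B T X i *v x))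
           + (A i *v x + B i *v (gainK R m A B T X i *v x)) \<bullet> (phi m T X i *v (A i *v x + B i *v (gainK R m A B T X i *v x)))"
proof -
  have sy: "symmetric_mat (phi m T X i)" using Xp phi_sym psd_mat_def by blast
  have ps: "\<forall>y. 0 \<le> y \<bullet> (phi m T X i *v y)" using phi_psd[of m T i X] Tn Xp by blast
  note c1 = core(1)[OF sy ps Rpd, where Q=Q and A="A i" and B="B i", folded riccR_def gainK_def]
  note c2 = core(2)[OF sy ps Rpd, where B="B i"]
  show "x \<bullet> (riccR Q R m A B T X i *v x) \<le> x \<bullet> (Q *v x) + u \<bullet> (R *v u)
           + (A i *v x + B i *v u) \<bullet> (phi m T X i *v (A i *v x + B i *v u))"
    using c1[of x u] c2[of "u - gainK R m A B T X i *v x"] by linarith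
  show "x \<bullet> (riccR Q R m A B T X i *v x) = x \<bullet> (Q *v x) + (gainK R m A B T X i *v x) \<bullet> (R *v (gainK R m A B T X i *v x))
           + (A i *v x + B i *v (gainK R m A B T X i *v x)) \<bullet> (phi m T X i *v (A i *v x + B i *v (gainK R m A B T X i *v x)))"
    using c1[of x "gainK R m A B T X i *v x"] by simp
qed

lemma pd_lower:
  fixes Q :: "real^'n^'n"
  assumes "pd_mat Q"
  shows "\<exists>q>0. \<forall>x. q * (norm x)^2 \<le> x \<bullet> (Q *v x)"
proof -
  have ne: "sphere (0::real^'n) 1 \<noteq> {}" by simp
  have co: "continuous_on (sphere 0 1) (\<lambda>x::real^'n. x \<bullet> (Q *v x))"
    by (intro continuous_intros linear_continuous_on matrix_vector_mul_bounded_linear)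
  obtain u where u: "u \<in> sphere 0 1" and mn: "\<forall>y\<in>sphere 0 1. u \<bullet> (Q *v u) \<le> y \<bullet> (Q *v y)"
    using continuous_attains_inf[OF compact_sphere ne co] by blast
  have "u \<noteq> 0" using u by auto
  then have qpos: "0 < u \<bullet> (Q *v u)" using assms unfolding pd_mat_def by auto
  show ?thesis
  proof (intro exI[of _ "u \<bullet> (Q *v u)"] conjI allI qpos)
    fix x :: "real^'n"
    show "u \<bullet> (Q *v u) * (norm x)^2 \<le> x \<bullet> (Q *v x)"
    proof (cases "x = 0")
      case True then show ?thesis by simp
    next
      case False
      define y where "y = (1 / norm x) *\<^sub>R x"
      have "y \<in> sphere 0 1" using False by (simp add: y_def)
      then have "u \<bullet> (Q *v u) \<le> y \<bullet> (Q *v y)" using mn by blast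
      also have "y \<bullet> (Q *v y) = (x \<bullet> (Q *v x)) / (norm x)^2"
        by (simp add: y_def matrix_vector_mult_scaleR power2_eq_square)
      finally show ?thesis using False by (simp add: field_simps)
    qed
  qed
qed

lemma quad_upper1:
  fixes P :: "real^'n^'n"
  shows "\<exists>M. \<forall>x. x \<bullet> (P *v x) \<le> M * (norm x)^2"
proof -
  obtain K where K: "\<And>x. norm (P *v x) \<le> norm x * K"
    using bounded_linear.bounded[OF matrix_vector_mul_bounded_linear[of P]] by blast
  show ?thesis
  proof (intro exI allI)
    fix x :: "real^'n"
    have "x \<bullet> (P *v x) \<le> norm x * norm (P *v x)" using Cauchy_Schwarz_ineq2[of x "P *v x"] by linarith
    also have "\<dots> \<le> norm x * (norm x * K)" by (simp add: K mult_left_mono)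
    finally show "x \<bullet> (P *v x) \<le> K * (norm x)^2" by (simp add: power2_eq_square mult_ac)
  qed
qed

lemma quad_upper:
  fixes P :: "nat \<Rightarrow> real^'n^'n"
  shows "\<exists>M. \<forall>j<m. \<forall>x. x \<bullet> (P j *v x) \<le> M * (norm x)^2"
proof (induction m)
  case 0 then show ?case by simp
next
  case (Suc m)
  then obtain M where M: "\<forall>j<m. \<forall>x. x \<bullet> (P j *v x) \<le> M * (norm x)^2" by blast
  obtain M' where M': "\<forall>x. x \<bullet> (P m *v x) \<le> M' * (norm x)^2" using quad_upper1 by blast
  show ?case
  proof (intro exI[of _ "max M M'"] allI impI)
    fix j and x :: "real^'n" assume "j < Suc m"
    have "M * (norm x)^2 \<le> max M M' * (norm x)^2" "M' * (norm x)^2 \<le> max M M' * (norm x)^2"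
      by (simp_all add: mult_right_mono)
    then show "x \<bullet> (P j *v x) \<le> max M M' * (norm x)^2"
      using M M' \<open>j < Suc m\<close> by (metis less_Suc_eq order_trans)
  qed
qed

lemma geo_limit:
  fixes d c e a :: real
  assumes "\<forall>t. d \<le> c * e^t * a" "e < 1"
  shows "d \<le> 0"
proof (rule ccontr)
  assume "\<not> d \<le> 0"
  then have d: "d > 0" by simp
  have ca: "c * a > 0" using assms(1)[rule_format, of 0] d by simp
  obtain t where "e^t < d / (c * a)" using real_arch_pow_inv[OF divide_pos_pos[OF d ca] assms(2)] by blast
  then have "c * e^t * a < d" using ca by (simp add: field_simps)
  then show False using assms(1) by (metis not_le)
qed

lemma quad_eq:
  fixes X Y :: "real^'n^'n"
  assumes "symmetric_mat X" "symmetric_mat Y" "\<forall>x. x \<bullet> (X *v x) = x \<bullet> (Y *v x)"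
  shows "X = Y"
proof -
  define D where "D = X - Y"
  have sD: "symmetric_mat D" using assms unfolding D_def symmetric_mat_def
    by (simp add: transpose_def vec_eq_iff)
  have z: "\<forall>x. x \<bullet> (D *v x) = 0" using assms(3) by (simp add: D_def matrix_vector_mult_diff_rdistrib inner_diff_right)
  have "D *v y = 0" for y
  proof -
    define x where "x = D *v y"
    have "(x + y) \<bullet> (D *v (x + y)) = x \<bullet> (D *v x) + 2 * (x \<bullet> (D *v y)) + y \<bullet> (D *v y)"
      using sym_dot[OF sD, of y x]
      by (simp add: matrix_vector_right_distrib inner_add_left inner_add_right inner_commute)
    then have "x \<bullet> (D *v y) = 0" using z by simp
    then show ?thesis by (simp add: x_def)
  qed
  then have "D = 0" by (simp add: matrix_eq)
  then show ?thesis by (simp add: D_def)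
qed

lemma pd_nonneg: "pd_mat R \<Longrightarrow> 0 \<le> u \<bullet> (R *v u)"
  unfolding pd_mat_def by (cases "u = 0") (auto intro: less_imp_le)

lemma pd_psd: "pd_mat R \<Longrightarrow> psd_mat R"
  using pd_nonneg unfolding pd_mat_def psd_mat_def by blast

lemma uniq_le:
  fixes A :: "nat \<Rightarrow> real^'n::finite^'n" and B :: "nat \<Rightarrow> real^'p::finite^'n"
  assumes Tn: "\<forall>i<m. \<forall>j<m. 0 \<le> T i j" and Qpd: "pd_mat Q" and Rpd: "pd_mat R"
    and Xs: "riccati_sol Q R m A B T X" and Ys: "riccati_sol Q R m A B T Y"
    and Xp: "\<forall>i<m. psd_mat (X i)" and Yp: "\<forall>i<m. psd_mat (Y i)"
  shows "\<forall>k<m. \<forall>x. x \<bullet> (X k *v x) \<le> x \<bullet> (Y k *v x)"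
proof -
  obtain q where q: "q > 0" "\<forall>x. q * (norm x)^2 \<le> x \<bullet> (Q *v x)" using pd_lower[OF Qpd] by blast
  obtain MX0 where MX0: "\<forall>j<m. \<forall>x. x \<bullet> (X j *v x) \<le> MX0 * (norm x)^2" using quad_upper by blast
  obtain MY0 where MY0: "\<forall>j<m. \<forall>x. x \<bullet> (Y j *v x) \<le> MY0 * (norm x)^2" using quad_upper by blast
  define MX where "MX = max MX0 0"
  define MY where "MY = max MY0 q"
  have MX: "\<forall>j<m. \<forall>x. x \<bullet> (X j *v x) \<le> MX * (norm x)^2"
    using MX0 unfolding MX_def by (meson max.cobounded1 mult_right_mono order_trans zero_le_power2)
  have MY: "\<forall>j<m. \<forall>x. x \<bullet> (Y j *v x) \<le> MY * (norm x)^2"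
    using MY0 unfolding MY_def by (meson max.cobounded1 mult_right_mono order_trans zero_le_power2)
  have MYq: "MY \<ge> q" unfolding MY_def by simp
  define e where "e = 1 - q / MY"
  have e0: "0 \<le> e" "e < 1" using MYq q(1) unfolding e_def by (auto simp: field_simps)
  define G where "G k = gainK R m A B T Y k" for k
  have Yeq: "x \<bullet> (Y k *v x) = x \<bullet> (Q *v x) + (G k *v x) \<bullet> (R *v (G k *v x))
           + (A k *v x + B k *v (G k *v x)) \<bullet> (phi m T Y k *v (A k *v x + B k *v (G k *v x)))"
    if "k < m" for k x
    using ric_facts(2)[where m=m and T=T and i=k and X=Y and R=R and Q=Q and A=A and B=B and x=x] Tn Yp Rpd Ys that unfolding riccati_sol_def G_def by metis
  have Xle: "x \<bullet> (X k *v x) \<le> x \<bullet> (Q *v x) + u \<bullet> (R *v u)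
           + (A k *v x + B k *v u) \<bullet> (phi m T X k *v (A k *v x + B k *v u))"
    if "k < m" for k x u
    using ric_facts(1)[where m=m and T=T and i=k and X=X and R=R and Q=Q and A=A and B=B and x=x and u=u] Tn Xp Rpd Xs that unfolding riccati_sol_def by metis
  have Yphi: "(A k *v x + B k *v (G k *v x)) \<bullet> (phi m T Y k *v (A k *v x + B k *v (G k *v x)))
      \<le> e * (x \<bullet> (Y k *v x))" if "k < m" for k x
  proof -
    have "(q / MY) * (x \<bullet> (Y k *v x)) \<le> (q / MY) * (MY * (norm x)^2)"
      using MY that q(1) MYq by (intro mult_left_mono) auto
    also have "\<dots> = q * (norm x)^2" using MYq q(1) by simp
    also have "\<dots> \<le> x \<bullet> (Q *v x)" using q by blast
    finally have "(q / MY) * (x \<bullet> (Y k *v x)) \<le> x \<bullet> (Q *v x)" .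
    then show ?thesis using Yeq[OF that, of x] pd_nonneg[OF Rpd, of "G k *v x"]
      unfolding e_def by (simp add: algebra_simps)
  qed
  have YgeQ: "q * (norm x)^2 \<le> x \<bullet> (Y k *v x)" if "k < m" for k x
  proof -
    have "0 \<le> (A k *v x + B k *v (G k *v x)) \<bullet> (phi m T Y k *v (A k *v x + B k *v (G k *v x)))"
      using phi_psd[of m T k Y "A k *v x + B k *v (G k *v x)"] Tn Yp that by blast
    then show ?thesis using Yeq[OF that, of x] pd_nonneg[OF Rpd, of "G k *v x"] q(2)[rule_format, of x]
      by linarith
  qed
  define Inv where "Inv c \<longleftrightarrow> (\<forall>k<m. \<forall>x. x \<bullet> (X k *v x) - x \<bullet> (Y k *v x) \<le> c * (x \<bullet> (Y k *v x)))" for c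
  have step: "Inv (c * e)" if c0: "c \<ge> 0" and I: "Inv c" for c
    unfolding Inv_def
  proof (intro allI impI)
    fix k x assume k: "k < m"
    define u where "u = G k *v x"
    define y where "y = A k *v x + B k *v u"
    have "x \<bullet> (X k *v x) - x \<bullet> (Y k *v x) \<le> y \<bullet> (phi m T X k *v y) - y \<bullet> (phi m T Y k *v y)"
      using Xle[OF k, of x u] Yeq[OF k, of x] unfolding y_def u_def by simp
    also have "\<dots> = (\<Sum>j<m. T k j * (y \<bullet> (X j *v y) - y \<bullet> (Y j *v y)))"
      by (simp add: phi_quad sum_subtractf right_diff_distrib)
    also have "\<dots> \<le> (\<Sum>j<m. T k j * (c * (y \<bullet> (Y j *v y))))"
      using I Tn k unfolding Inv_def by (intro sum_mono mult_left_mono) auto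
    also have "\<dots> = c * (y \<bullet> (phi m T Y k *v y))"
      by (simp add: phi_quad sum_distrib_left mult_ac)
    also have "\<dots> \<le> c * (e * (x \<bullet> (Y k *v x)))"
      using Yphi[OF k, of x] c0 unfolding y_def u_def by (intro mult_left_mono) auto
    finally show "x \<bullet> (X k *v x) - x \<bullet> (Y k *v x) \<le> c * e * (x \<bullet> (Y k *v x))" by (simp add: mult_ac)
  qed
  define c0 where "c0 = MX / q"
  have c0pos: "c0 \<ge> 0" unfolding c0_def MX_def using q(1) by simp
  have init: "Inv c0" unfolding Inv_def
  proof (intro allI impI)
    fix k x assume k: "k < m"
    have "x \<bullet> (X k *v x) - x \<bullet> (Y k *v x) \<le> x \<bullet> (X k *v x)"
      using Yp k unfolding psd_mat_def by auto
    also have "\<dots> \<le> MX * (norm x)^2" using MX k by blast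
    also have "\<dots> = c0 * (q * (norm x)^2)" unfolding c0_def using q(1) by simp
    also have "\<dots> \<le> c0 * (x \<bullet> (Y k *v x))" using YgeQ[OF k] c0pos by (intro mult_left_mono) auto
    finally show "x \<bullet> (X k *v x) - x \<bullet> (Y k *v x) \<le> c0 * (x \<bullet> (Y k *v x))" .
  qed
  have all: "Inv (c0 * e^t)" for t
  proof (induction t)
    case 0 then show ?case using init by simp
  next
    case (Suc t)
    have "Inv (c0 * e^t * e)" using step[OF _ Suc] c0pos e0 by simp
    then show ?case by (simp add: mult_ac)
  qed
  show ?thesis
  proof (intro allI impI)
    fix k x assume k: "k < m"
    have "\<forall>t. x \<bullet> (X k *v x) - x \<bullet> (Y k *v x) \<le> c0 * e^t * (x \<bullet> (Y k *v x))"
      using all k unfolding Inv_def by blast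
    from geo_limit[OF this e0(2)] show "x \<bullet> (X k *v x) \<le> x \<bullet> (Y k *v x)" by simp
  qed
qed



lemma part_U: "is_partition s r \<Omega> \<Longrightarrow> (\<Union>k<r. \<Omega> k) = {..<s}"
  by (simp add: is_partition_def)

lemma part_sub: "is_partition s r \<Omega> \<Longrightarrow> k < r \<Longrightarrow> \<Omega> k \<subseteq> {..<s}"
proof -
  assume p: "is_partition s r \<Omega>" and k: "k < r"
  have "\<Omega> k \<subseteq> (\<Union>k<r. \<Omega> k)" using k by (intro UN_upper) simp
  then show ?thesis using part_U[OF p] by simp
qed

lemma part_fin: "is_partition s r \<Omega> \<Longrightarrow> k < r \<Longrightarrow> finite (\<Omega> k)"
  by (rule finite_subset[OF part_sub]) auto

lemma part_ne: "is_partition s r \<Omega> \<Longrightarrow> k < r \<Longrightarrow> \<Omega> k \<noteq> {}"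
  by (simp add: is_partition_def)

lemma part_cover: "is_partition s r \<Omega> \<Longrightarrow> i < s \<Longrightarrow> \<exists>k<r. i \<in> \<Omega> k"
proof -
  assume p: "is_partition s r \<Omega>" and i: "i < s"
  then have "i \<in> (\<Union>k<r. \<Omega> k)" using part_U[OF p] by simp
  then show ?thesis by (auto simp: lessThan_iff)
qed

lemma part_disj: "is_partition s r \<Omega> \<Longrightarrow> k < r \<Longrightarrow> l < r \<Longrightarrow> i \<in> \<Omega> k \<Longrightarrow> i \<in> \<Omega> l \<Longrightarrow> k = l"
proof (rule ccontr)
  assume p: "is_partition s r \<Omega>" and kl: "k < r" "l < r" "i \<in> \<Omega> k" "i \<in> \<Omega> l" "k \<noteq> l"
  then have "\<Omega> k \<inter> \<Omega> l = {}" unfolding is_partition_def by blast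
  then show False using kl by blast
qed

lemma part_block: "is_partition s r \<Omega> \<Longrightarrow> k < r \<Longrightarrow> i \<in> \<Omega> k \<Longrightarrow> block_of r \<Omega> i = k"
  unfolding block_of_def
  by (rule the_equality) (auto dest: part_disj)

lemma part_sum: "is_partition s r \<Omega> \<Longrightarrow> sum f {..<s} = (\<Sum>l<r. sum f (\<Omega> l))"
proof -
  assume p: "is_partition s r \<Omega>"
  have "sum f (\<Union>l\<in>{..<r}. \<Omega> l) = (\<Sum>l<r. sum f (\<Omega> l))"
  proof (rule sum.UNION_disjoint)
    show "finite {..<r}" by simp
    show "\<forall>l\<in>{..<r}. finite (\<Omega> l)" using part_fin[OF p] by simp
    show "\<forall>l\<in>{..<r}. \<forall>k\<in>{..<r}. l \<noteq> k \<longrightarrow> \<Omega> l \<inter> \<Omega> k = {}"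
      using part_disj[OF p] by blast
  qed
  then show ?thesis using part_U[OF p] by simp
qed

lemma block_const:
  fixes Ae :: "nat \<Rightarrow> real^'n::finite^'n" and Be :: "nat \<Rightarrow> real^'p::finite^'n"
  assumes part: "is_partition s r \<Omega>"
    and Tn: "\<forall>i<s. \<forall>j<s. 0 \<le> Tb i j"
    and Tblk: "\<forall>k<r. \<forall>l<r. \<forall>i\<in>\<Omega> k. \<forall>i'\<in>\<Omega> k. (\<Sum>j\<in>\<Omega> l. Tb i j) = (\<Sum>j\<in>\<Omega> l. Tb i' j)"
    and ABblk: "\<forall>k<r. \<forall>i\<in>\<Omega> k. \<forall>i'\<in>\<Omega> k. Ae i = Ae i' \<and> Be i = Be i'"
    and Qpd: "pd_mat Q" and Rpd: "pd_mat R"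
    and Ps: "riccati_sol Q R s Ae Be Tb P" and Pp: "\<forall>i<s. psd_mat (P i)"
  shows "\<forall>k<r. \<forall>i\<in>\<Omega> k. \<forall>i'\<in>\<Omega> k. P i = P i'"
proof -
  have ins: "i < s" if "k < r" "i \<in> \<Omega> k" for k i using part_sub[OF part that(1)] that(2) by blast
  obtain q where q: "q > 0" "\<forall>x. q * (norm x)^2 \<le> x \<bullet> (Q *v x)" using pd_lower[OF Qpd] by blast
  obtain M0 where M0: "\<forall>j<s. \<forall>x. x \<bullet> (P j *v x) \<le> M0 * (norm x)^2" using quad_upper by blast
  define M where "M = max M0 q"
  have M: "\<forall>j<s. \<forall>x. x \<bullet> (P j *v x) \<le> M * (norm x)^2"
    using M0 unfolding M_def by (meson max.cobounded1 mult_right_mono order_trans zero_le_power2)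
  have Mq: "M \<ge> q" unfolding M_def by simp
  define e where "e = 1 - q / M"
  have e0: "0 \<le> e" "e < 1" using Mq q(1) unfolding e_def by (auto simp: field_simps)
  define G where "G k = gainK R s Ae Be Tb P k" for k
  have Peq: "x \<bullet> (P k *v x) = x \<bullet> (Q *v x) + (G k *v x) \<bullet> (R *v (G k *v x))
           + (Ae k *v x + Be k *v (G k *v x)) \<bullet> (phi s Tb P k *v (Ae k *v x + Be k *v (G k *v x)))"
    if "k < s" for k x
    using ric_facts(2)[where m=s and T=Tb and i=k and X=P and R=R and Q=Q and A=Ae and B=Be and x=x] Tn Pp Rpd Ps that
    unfolding riccati_sol_def G_def by metis
  have Ple: "x \<bullet> (P k *v x) \<le> x \<bullet> (Q *v x) + u \<bullet> (R *v u)
           + (Ae k *v x + Be k *v u) \<bullet> (phi s Tb P k *v (Ae k *v x + Be k *v u))"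
    if "k < s" for k x u
    using ric_facts(1)[where m=s and T=Tb and i=k and X=P and R=R and Q=Q and A=Ae and B=Be and x=x and u=u] Tn Pp Rpd Ps that
    unfolding riccati_sol_def by metis
  have Pphi: "(Ae k *v x + Be k *v (G k *v x)) \<bullet> (phi s Tb P k *v (Ae k *v x + Be k *v (G k *v x)))
      \<le> e * (x \<bullet> (P k *v x))" if "k < s" for k x
  proof -
    have "(q / M) * (x \<bullet> (P k *v x)) \<le> (q / M) * (M * (norm x)^2)"
      using M that q(1) Mq by (intro mult_left_mono) auto
    also have "\<dots> = q * (norm x)^2" using Mq q(1) by simp
    also have "\<dots> \<le> x \<bullet> (Q *v x)" using q by blast
    finally have "(q / M) * (x \<bullet> (P k *v x)) \<le> x \<bullet> (Q *v x)" .
    then show ?thesis using Peq[OF that, of x] pd_nonneg[OF Rpd, of "G k *v x"]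
      unfolding e_def by (simp add: algebra_simps)
  qed
  have PgeQ: "q * (norm x)^2 \<le> x \<bullet> (P k *v x)" if "k < s" for k x
  proof -
    have "0 \<le> (Ae k *v x + Be k *v (G k *v x)) \<bullet> (phi s Tb P k *v (Ae k *v x + Be k *v (G k *v x)))"
      using phi_psd[of s Tb k P "Ae k *v x + Be k *v (G k *v x)"] Tn Pp that by blast
    then show ?thesis using Peq[OF that, of x] pd_nonneg[OF Rpd, of "G k *v x"] q(2)[rule_format, of x]
      by linarith
  qed
  define Inv where "Inv c \<longleftrightarrow> (\<forall>l<r. \<forall>j\<in>\<Omega> l. \<forall>j'\<in>\<Omega> l. \<forall>x.
      x \<bullet> (P j *v x) - x \<bullet> (P j' *v x) \<le> c * (x \<bullet> (P j' *v x)))" for c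
  have step: "Inv (c * e)" if c0: "c \<ge> 0" and I: "Inv c" for c
    unfolding Inv_def
  proof (intro allI impI ballI)
    fix k i' i x assume k: "k < r" and i': "i' \<in> \<Omega> k" and i: "i \<in> \<Omega> k"
    have iS: "i < s" and iS': "i' < s" using ins k i i' by auto
    define u where "u = G i *v x"
    define y where "y = Ae i *v x + Be i *v u"
    have AB': "Ae i' = Ae i" "Be i' = Be i" using ABblk k i i' by blast+
    have y': "y = Ae i' *v x + Be i' *v u" unfolding y_def AB' ..
    define f where "f j = y \<bullet> (P j *v y)" for j
    have blockb: "(\<Sum>j\<in>\<Omega> l. Tb i' j * f j) \<le> (1 + c) * (\<Sum>j\<in>\<Omega> l. Tb i j * f j)" if l: "l < r" for l
    proof -
      have fin: "finite (\<Omega> l)" and ne: "\<Omega> l \<noteq> {}" using part_fin part_ne part l by auto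
      define mn where "mn = Min (f ` \<Omega> l)"
      have "mn \<in> f ` \<Omega> l" unfolding mn_def using fin ne by (intro Min_in) auto
      then obtain j0 where j0: "j0 \<in> \<Omega> l" "f j0 = mn" by blast
      have mnle: "mn \<le> f j" if "j \<in> \<Omega> l" for j unfolding mn_def using fin that by (intro Min_le) auto
      have fle: "f j \<le> (1 + c) * mn" if "j \<in> \<Omega> l" for j
      proof -
        have "f j - f j0 \<le> c * f j0" using I l that j0(1) unfolding Inv_def f_def by blast
        then show ?thesis using j0(2) by (simp add: distrib_right)
      qed
      have Tnn: "0 \<le> Tb a j" if "a < s" "j \<in> \<Omega> l" for a j
        using Tn that part_sub[OF part l] by blast
      have "(\<Sum>j\<in>\<Omega> l. Tb i' j * f j) \<le> (\<Sum>j\<in>\<Omega> l. Tb i' j * ((1 + c) * mn))"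
        using fle Tnn[OF iS'] by (intro sum_mono mult_left_mono) auto
      also have "\<dots> = (1 + c) * mn * (\<Sum>j\<in>\<Omega> l. Tb i' j)" by (simp add: sum_distrib_left sum_distrib_right mult_ac)
      also have "\<dots> = (1 + c) * mn * (\<Sum>j\<in>\<Omega> l. Tb i j)"
      proof -
        have "(\<Sum>j\<in>\<Omega> l. Tb i' j) = (\<Sum>j\<in>\<Omega> l. Tb i j)" using Tblk k l i i' by blast
        then show ?thesis by simp
      qed
      also have "\<dots> = (\<Sum>j\<in>\<Omega> l. Tb i j * ((1 + c) * mn))" by (simp add: sum_distrib_left sum_distrib_right mult_ac)
      also have "\<dots> \<le> (\<Sum>j\<in>\<Omega> l. Tb i j * ((1 + c) * f j))"
        using mnle Tnn[OF iS] c0 by (intro sum_mono mult_left_mono) auto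
      also have "\<dots> = (1 + c) * (\<Sum>j\<in>\<Omega> l. Tb i j * f j)" by (simp add: sum_distrib_left mult_ac)
      finally show ?thesis .
    qed
    have "y \<bullet> (phi s Tb P i' *v y) = (\<Sum>l<r. \<Sum>j\<in>\<Omega> l. Tb i' j * f j)"
      unfolding phi_quad f_def by (simp only: part_sum[OF part])
    also have "\<dots> \<le> (\<Sum>l<r. (1 + c) * (\<Sum>j\<in>\<Omega> l. Tb i j * f j))"
      using blockb by (intro sum_mono) auto
    also have "\<dots> = (1 + c) * (\<Sum>l<r. \<Sum>j\<in>\<Omega> l. Tb i j * f j)" by (simp add: sum_distrib_left)
    also have "\<dots> = (1 + c) * (y \<bullet> (phi s Tb P i *v y))"
      unfolding phi_quad f_def by (simp only: part_sum[OF part])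
    finally have key: "y \<bullet> (phi s Tb P i' *v y) \<le> (1 + c) * (y \<bullet> (phi s Tb P i *v y))" .
    have "x \<bullet> (P i' *v x) - x \<bullet> (P i *v x) \<le> y \<bullet> (phi s Tb P i' *v y) - y \<bullet> (phi s Tb P i *v y)"
    proof -
      have A1: "x \<bullet> (P i' *v x) \<le> x \<bullet> (Q *v x) + u \<bullet> (R *v u) + y \<bullet> (phi s Tb P i' *v y)"
        using Ple[OF iS', of x u] y' by simp
      have A2: "x \<bullet> (P i *v x) = x \<bullet> (Q *v x) + u \<bullet> (R *v u) + y \<bullet> (phi s Tb P i *v y)"
        using Peq[OF iS, of x] unfolding y_def u_def by simp
      show ?thesis using A1 A2 by linarith
    qed
    also have "\<dots> \<le> c * (y \<bullet> (phi s Tb P i *v y))" using key by (simp add: algebra_simps)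
    also have "\<dots> \<le> c * (e * (x \<bullet> (P i *v x)))"
      using Pphi[OF iS, of x] c0 unfolding y_def u_def by (intro mult_left_mono) auto
    finally show "x \<bullet> (P i' *v x) - x \<bullet> (P i *v x) \<le> c * e * (x \<bullet> (P i *v x))" by (simp add: mult_ac)
  qed
  define c0 where "c0 = M / q"
  have c0pos: "c0 \<ge> 0" unfolding c0_def using q(1) Mq by simp
  have init: "Inv c0" unfolding Inv_def
  proof (intro allI impI ballI)
    fix k j j' x assume k: "k < r" and j: "j \<in> \<Omega> k" and j': "j' \<in> \<Omega> k"
    have js: "j < s" "j' < s" using ins k j j' by auto
    have "x \<bullet> (P j *v x) - x \<bullet> (P j' *v x) \<le> x \<bullet> (P j *v x)"
      using Pp js unfolding psd_mat_def by auto
    also have "\<dots> \<le> M * (norm x)^2" using M js by blast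
    also have "\<dots> = c0 * (q * (norm x)^2)" unfolding c0_def using q(1) by simp
    also have "\<dots> \<le> c0 * (x \<bullet> (P j' *v x))" using PgeQ[OF js(2)] c0pos by (intro mult_left_mono) auto
    finally show "x \<bullet> (P j *v x) - x \<bullet> (P j' *v x) \<le> c0 * (x \<bullet> (P j' *v x))" .
  qed
  have all: "Inv (c0 * e^t)" for t
  proof (induction t)
    case 0 then show ?case using init by simp
  next
    case (Suc t)
    have "Inv (c0 * e^t * e)" using step[OF _ Suc] c0pos e0 by simp
    then show ?case by (simp add: mult_ac)
  qed
  have le: "x \<bullet> (P j *v x) \<le> x \<bullet> (P j' *v x)" if "k < r" "j \<in> \<Omega> k" "j' \<in> \<Omega> k" for k j j' x
  proof -
    have "\<forall>t. x \<bullet> (P j *v x) - x \<bullet> (P j' *v x) \<le> c0 * e^t * (x \<bullet> (P j' *v x))"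
      using all that unfolding Inv_def by blast
    from geo_limit[OF this e0(2)] show ?thesis by simp
  qed
  show ?thesis
  proof (intro allI impI ballI)
    fix k i i' assume k: "k < r" and i: "i \<in> \<Omega> k" and i': "i' \<in> \<Omega> k"
    have "i < s" "i' < s" using ins k i i' by auto
    then have sy: "symmetric_mat (P i)" "symmetric_mat (P i')" using Pp unfolding psd_mat_def by auto
    have "\<forall>x. x \<bullet> (P i *v x) = x \<bullet> (P i' *v x)"
      using le[OF k i i'] le[OF k i' i] by (intro allI order_antisym)
    then show "P i = P i'" by (rule quad_eq[OF sy])
  qed
qed



theorem lemma3:
  fixes s r :: nat
    and \<Omega> :: "nat \<Rightarrow> nat set"
    and A :: "nat \<Rightarrow> real^'n::finite^'n" and B :: "nat \<Rightarrow> real^'p::finite^'n"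
    and T Tbar :: "nat \<Rightarrow> nat \<Rightarrow> real"
    and Q :: "real^'n^'n" and R :: "real^'p^'p"
    and Pbar :: "nat \<Rightarrow> real^'n^'n"
  assumes part: "is_partition s r \<Omega>"
    and T_markov: "markov s T"
    and Tbar_markov: "markov s Tbar"
    and Tbar_blocks: "\<forall>k<r. \<forall>l<r. \<forall>i\<in>\<Omega> k.
                        (\<Sum>j\<in>\<Omega> l. Tbar i j) = reduced_T \<Omega> T k l"
    and Q_pd: "pd_mat Q" and R_pd: "pd_mat R"
    and Pbar_sol: "riccati_sol Q R s (expand r \<Omega> (avg_mat \<Omega> A))
                     (expand r \<Omega> (avg_mat \<Omega> B)) Tbar Pbar"
    and Pbar_pd: "\<forall>i<s. pd_mat (Pbar i)"
  shows "\<exists>Phat.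
           riccati_sol Q R r (avg_mat \<Omega> A) (avg_mat \<Omega> B) (reduced_T \<Omega> T) Phat \<and>
           in_S_plus r Phat \<and>
           (\<forall>P'. riccati_sol Q R r (avg_mat \<Omega> A) (avg_mat \<Omega> B) (reduced_T \<Omega> T) P' \<and>
                 in_S_plus r P' \<longrightarrow> (\<forall>k<r. P' k = Phat k)) \<and>
           (\<forall>k<r. \<forall>i\<in>\<Omega> k.
              Phat k = Pbar i \<and>
              gainK R r (avg_mat \<Omega> A) (avg_mat \<Omega> B) (reduced_T \<Omega> T) Phat k =
              gainK R s (expand r \<Omega> (avg_mat \<Omega> A)) (expand r \<Omega> (avg_mat \<Omega> B)) Tbar Pbar i)"
proof -
  define Ah where "Ah = avg_mat \<Omega> A"
  define Bh where "Bh = avg_mat \<Omega> B"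
  define Th where "Th = reduced_T \<Omega> T"
  define Ae where "Ae = expand r \<Omega> Ah"
  define Be where "Be = expand r \<Omega> Bh"
  have ins: "i < s" if "k < r" "i \<in> \<Omega> k" for k i using part_sub[OF part that(1)] that(2) by blast
  have AeBe: "Ae i = Ah k \<and> Be i = Bh k" if "k < r" "i \<in> \<Omega> k" for k i
    using part_block[OF part that] unfolding Ae_def Be_def expand_def by simp
  have Pp: "\<forall>i<s. psd_mat (Pbar i)" using Pbar_pd pd_psd by blast
  have Tbn: "\<forall>i<s. \<forall>j<s. 0 \<le> Tbar i j" using Tbar_markov unfolding markov_def by blast
  have bc: "\<forall>k<r. \<forall>i\<in>\<Omega> k. \<forall>i'\<in>\<Omega> k. Pbar i = Pbar i'"
  proof (rule block_const[OF part Tbn _ _ Q_pd R_pd _ Pp])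
    show "\<forall>k<r. \<forall>l<r. \<forall>i\<in>\<Omega> k. \<forall>i'\<in>\<Omega> k. (\<Sum>j\<in>\<Omega> l. Tbar i j) = (\<Sum>j\<in>\<Omega> l. Tbar i' j)"
    proof (intro allI impI ballI)
      fix k l i i' assume "k < r" "l < r" "i \<in> \<Omega> k" "i' \<in> \<Omega> k"
      then show "(\<Sum>j\<in>\<Omega> l. Tbar i j) = (\<Sum>j\<in>\<Omega> l. Tbar i' j)" using Tbar_blocks by simp
    qed
    show "\<forall>k<r. \<forall>i\<in>\<Omega> k. \<forall>i'\<in>\<Omega> k. Ae i = Ae i' \<and> Be i = Be i'"
      using AeBe by simp
    show "riccati_sol Q R s Ae Be Tbar Pbar" using Pbar_sol unfolding Ae_def Be_def Ah_def Bh_def .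
  qed
  define Phat where "Phat k = Pbar (SOME i. i \<in> \<Omega> k)" for k
  have Phat: "Phat k = Pbar i" if "k < r" "i \<in> \<Omega> k" for k i
  proof -
    have "(SOME i. i \<in> \<Omega> k) \<in> \<Omega> k" using that(2) by (rule someI)
    then show ?thesis unfolding Phat_def using bc that by blast
  qed
  have phieq: "phi r Th Phat k = phi s Tbar Pbar i" if k: "k < r" and i: "i \<in> \<Omega> k" for k i
  proof -
    have "phi r Th Phat k = (\<Sum>l<r. (\<Sum>j\<in>\<Omega> l. Tbar i j) *\<^sub>R Phat l)"
      unfolding phi_def Th_def using Tbar_blocks k i by (intro sum.cong) auto
    also have "\<dots> = (\<Sum>l<r. \<Sum>j\<in>\<Omega> l. Tbar i j *\<^sub>R Pbar j)"
      by (intro sum.cong refl) (auto simp: scaleR_sum_left Phat intro!: sum.cong)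
    also have "\<dots> = phi s Tbar Pbar i"
      unfolding phi_def by (simp only: part_sum[OF part])
    finally show ?thesis .
  qed
  have ricceq: "riccR Q R r Ah Bh Th Phat k = riccR Q R s Ae Be Tbar Pbar i"
    and gaineq: "gainK R r Ah Bh Th Phat k = gainK R s Ae Be Tbar Pbar i"
    if "k < r" "i \<in> \<Omega> k" for k i
    using phieq[OF that] AeBe[OF that] unfolding riccR_def gainK_def by simp_all
  have Phat_sol: "riccati_sol Q R r Ah Bh Th Phat"
    unfolding riccati_sol_def
  proof (intro allI impI)
    fix k assume k: "k < r"
    then obtain i where i: "i \<in> \<Omega> k" using part_ne[OF part k] by blast
    have "Phat k = Pbar i" using Phat k i .
    also have "\<dots> = riccR Q R s Ae Be Tbar Pbar i"
      using Pbar_sol ins[OF k i] unfolding riccati_sol_def Ae_def Be_def Ah_def Bh_def by blast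
    also have "\<dots> = riccR Q R r Ah Bh Th Phat k" using ricceq[OF k i] by simp
    finally show "Phat k = riccR Q R r Ah Bh Th Phat k" .
  qed
  have Phat_psd: "\<forall>k<r. psd_mat (Phat k)"
  proof (intro allI impI)
    fix k assume k: "k < r"
    then obtain i where i: "i \<in> \<Omega> k" using part_ne[OF part k] by blast
    show "psd_mat (Phat k)" using Phat[OF k i] Pp ins[OF k i] by simp
  qed
  have Thn: "\<forall>k<r. \<forall>l<r. 0 \<le> Th k l"
  proof (intro allI impI)
    fix k l assume k: "k < r" and l: "l < r"
    have "0 \<le> (\<Sum>i\<in>\<Omega> k. \<Sum>j\<in>\<Omega> l. T i j)"
      using T_markov part_sub[OF part k] part_sub[OF part l] unfolding markov_def
      by (intro sum_nonneg) blast
    then show "0 \<le> Th k l" unfolding Th_def reduced_T_def by simp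
  qed
  have uniq: "\<forall>k<r. P' k = Phat k" if P': "riccati_sol Q R r Ah Bh Th P'" "in_S_plus r P'" for P'
  proof (intro allI impI)
    fix k assume k: "k < r"
    have P'p: "\<forall>i<r. psd_mat (P' i)" using P'(2) unfolding in_S_plus_def .
    have l1: "\<forall>k<r. \<forall>x. x \<bullet> (P' k *v x) \<le> x \<bullet> (Phat k *v x)"
      by (rule uniq_le[OF Thn Q_pd R_pd P'(1) Phat_sol P'p Phat_psd])
    have l2: "\<forall>k<r. \<forall>x. x \<bullet> (Phat k *v x) \<le> x \<bullet> (P' k *v x)"
      by (rule uniq_le[OF Thn Q_pd R_pd Phat_sol P'(1) Phat_psd P'p])
    have sy: "symmetric_mat (P' k)" "symmetric_mat (Phat k)" using P'p Phat_psd k unfolding psd_mat_def by auto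
    have "\<forall>x. x \<bullet> (P' k *v x) = x \<bullet> (Phat k *v x)"
      using l1 l2 k by (intro allI order_antisym) auto
    then show "P' k = Phat k" by (rule quad_eq[OF sy])
  qed
  show ?thesis
    unfolding Ah_def[symmetric] Bh_def[symmetric] Th_def[symmetric] Ae_def[symmetric] Be_def[symmetric]
  proof (intro exI[of _ Phat] conjI allI impI ballI)
    show "riccati_sol Q R r Ah Bh Th Phat" by (rule Phat_sol)
    show "in_S_plus r Phat" using Phat_psd unfolding in_S_plus_def .
    show "\<And>P' k. riccati_sol Q R r Ah Bh Th P' \<and> in_S_plus r P' \<Longrightarrow> k < r \<Longrightarrow> P' k = Phat k"
      using uniq by blast
    show "\<And>k i. k < r \<Longrightarrow> i \<in> \<Omega> k \<Longrightarrow> Phat k = Pbar i" by (rule Phat)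
    show "\<And>k i. k < r \<Longrightarrow> i \<in> \<Omega> k \<Longrightarrow> gainK R r Ah Bh Th Phat k = gainK R s Ae Be Tbar Pbar i"
      by (rule gaineq)
  qed
qed

end
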